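(* Let $n\geq 1$ and $k\geq 2$ be integers. Then \[C_k(n)\leq \sum_{t=1}^{\lfloor n/2\rfloor} k^t A_k(n-2t,0^t)+n k^{\lceil n/2\rceil},\] where $0^t$ denotes the word consisting of $t$ zeros.
   Context: Words are over $\Sigma_k=\{0,1,\ldots,k-1\}$. A border of a word $w$ is a non-empty word that is both a proper prefix and a proper suffix of $w$. A word $w$ is closed if $|w|\leq 1$ or if $w$ has a border that occurs exactly twice in $w$ as a factor (overlapping occurrences counted). $C_k(n)$ denotes the number of closed words of length $n$ over $\Sigma_k$. $A_k(m,v)$ denotes the number of words of length $m$ over $\Sigma_k$ that do not contain $v$ as a factor (for $m=0$ the empty word is counted). *)

theory Defs
  imports Main
begin

definition words :: "nat \<Rightarrow> nat \<Rightarrow> nat list set" where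
  "words k n = {w. length w = n \<and> set w \<subseteq> {..<k}}"

definition is_factor :: "'a list \<Rightarrow> 'a list \<Rightarrow> bool" where
  "is_factor u w \<longleftrightarrow> (\<exists>x y. w = x @ u @ y)"

definition occ :: "'a list \<Rightarrow> 'a list \<Rightarrow> nat" where
  "occ u w = card {i. i + length u \<le> length w \<and> take (length u) (drop i w) = u}"

definition is_border :: "'a list \<Rightarrow> 'a list \<Rightarrow> bool" where
  "is_border u w \<longleftrightarrow> u \<noteq> [] \<and> length u < length w \<and>
     (\<exists>x. w = u @ x) \<and> (\<exists>x. w = x @ u)"

definition closed_word :: "'a list \<Rightarrow> bool" where
  "closed_word w \<longleftrightarrow> length w \<le> 1 \<or> (\<exists>u. is_border u w \<and> occ u w = 2)"

definition C :: "nat \<Rightarrow> nat \<Rightarrow> nat" where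
  "C k n = card {w \<in> words k n. closed_word w}"

definition A :: "nat \<Rightarrow> nat \<Rightarrow> nat list \<Rightarrow> nat" where
  "A k m v = card {w \<in> words k m. \<not> is_factor v w}"

end

theory Submission imports Defs begin
lemma words_card: "card (words k n) = k ^ n"
proof -
  have "words k n = {xs. set xs \<subseteq> {..<k} \<and> length xs = n}" unfolding words_def by auto
  thus ?thesis using card_lists_length_eq[of "{..<k}" n] by simp
qed

lemma words_finite: "finite (words k n)"
proof -
  have "words k n = {xs. set xs \<subseteq> {..<k} \<and> length xs = n}" unfolding words_def by auto
  thus ?thesis using finite_lists_length_eq[of "{..<k}" n] by simp
qed

definition sset :: "nat list \<Rightarrow> nat list \<Rightarrow> nat set" where
  "sset u p = {i. i \<le> length u \<and> i \<le> length p \<and> take i u = drop (length p - i) p}"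

definition st :: "nat list \<Rightarrow> nat list \<Rightarrow> nat" where
  "st u p = Max (sset u p)"

lemma sset_fin: "finite (sset u p)" unfolding sset_def by (rule finite_subset[of _ "{..length u}"]) auto
lemma sset_ne: "0 \<in> sset u p" unfolding sset_def by auto

lemma st_in: "st u p \<in> sset u p"
  unfolding st_def using sset_fin sset_ne Max_in by blast

lemma st_le: "st u p \<le> length u" "st u p \<le> length p"
  "take (st u p) u = drop (length p - st u p) p"
  using st_in[of u p] unfolding sset_def by auto

lemma st_step:
  assumes "st u p < length u" "a = u ! st u p"
  shows "st u p + 1 \<le> st u (p @ [a])"
proof -
  let ?s = "st u p"
  have "take (?s + 1) u = take ?s u @ [u ! ?s]"
    using assms(1) by (simp add: take_Suc_conv_app_nth)
  also have "\<dots> = drop (length p - ?s) p @ [a]" using st_le(3) assms(2) by simp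
  also have "\<dots> = drop (length (p @ [a]) - (?s + 1)) (p @ [a])"
    using st_le(2)[of u p] by simp
  finally have "?s + 1 \<in> sset u (p @ [a])"
    unfolding sset_def using assms(1) st_le(2)[of u p] by simp
  thus ?thesis unfolding st_def[of u "p @ [a]"] using sset_fin Max_ge by blast
qed

lemma mod2k: "(x::nat) < 2 * k \<Longrightarrow> x mod k = (if x < k then x else x - k)"
  by (simp add: le_mod_geq)

lemma cancelk: "(a::nat) < k \<Longrightarrow> b < k \<Longrightarrow> c < k \<Longrightarrow> (a + k - c) mod k = (b + k - c) mod k \<Longrightarrow> a = b"
  using mod2k[of "a + k - c" k] mod2k[of "b + k - c" k] by (auto split: if_splits)

fun enc :: "nat \<Rightarrow> nat list \<Rightarrow> nat list \<Rightarrow> nat list \<Rightarrow> nat list" where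
  "enc k u p [] = []"
| "enc k u p (a # z) = ((a + k - (u ! st u p) mod k) mod k) # enc k u (p @ [a]) z"

lemma enc_length: "length (enc k u p z) = length z"
  by (induction z arbitrary: p) auto

lemma enc_letters: "k > 0 \<Longrightarrow> set (enc k u p z) \<subseteq> {..<k}"
  by (induction z arbitrary: p) auto

lemma enc_inj: "k > 0 \<Longrightarrow> set z1 \<subseteq> {..<k} \<Longrightarrow> set z2 \<subseteq> {..<k} \<Longrightarrow>
   length z1 = length z2 \<Longrightarrow> enc k u p z1 = enc k u p z2 \<Longrightarrow> z1 = z2"
proof (induction z1 arbitrary: p z2)
  case Nil
  then show ?case by simp
next
  case (Cons a z1)
  then obtain b z2' where z2: "z2 = b # z2'" by (cases z2) auto
  let ?c = "u ! st u p mod k"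
  have c: "?c < k" using Cons.prems(1) by simp
  have ab: "a < k" "b < k" using Cons.prems z2 by auto
  have "(a + k - ?c) mod k = (b + k - ?c) mod k" using Cons.prems(5) z2 by simp
  hence "a = b" using ab c
    using cancelk by blast
  then show ?case using Cons z2 by auto
qed

lemma zero_iff: "(a::nat) < k \<Longrightarrow> c < k \<Longrightarrow> (a + k - c) mod k = 0 \<Longrightarrow> a = c"
proof -
  assume h: "a < k" "c < k" "(a + k - c) mod k = 0"
  have "a + k - c > 0" "a + k - c < 2 * k" using h by auto
  with h(3) have "a + k - c = k"
    using mod2k[of "a + k - c" k] by (auto split: if_splits)
  thus "a = c" using h by simp
qed

lemma prefix_lemma:
  assumes "k > 0" "set u \<subseteq> {..<k}"
  shows "set z \<subseteq> {..<k} \<Longrightarrow> r \<le> st u p \<Longrightarrow> enc k u p z = replicate (length u - r) 0 @ y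
         \<Longrightarrow> is_factor u (p @ z)"
proof (induction z arbitrary: p r y)
  case Nil
  show ?case
  proof (cases "st u p \<ge> length u")
    case True
    hence "st u p = length u" using st_le(1)[of u p] by simp
    hence "u = drop (length p - length u) p" using st_le(3)[of u p] by simp
    hence "p = take (length p - length u) p @ u" by (metis append_take_drop_id)
    thus ?thesis unfolding is_factor_def by (metis append.right_neutral append_Nil2)
  next
    case False
    then show ?thesis using Nil by simp
  qed
next
  case (Cons a z)
  show ?case
  proof (cases "st u p \<ge> length u")
    case True
    hence "st u p = length u" using st_le(1)[of u p] by simp
    hence "u = drop (length p - length u) p" using st_le(3)[of u p] by simp
    hence "p = take (length p - length u) p @ u" by (metis append_take_drop_id)
    hence "p @ a # z = take (length p - length u) p @ u @ (a # z)" by (metis append_assoc)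
    thus ?thesis unfolding is_factor_def by blast
  next
    case False
    then obtain j where j: "length u - r = Suc j" using Cons.prems(2) by (cases "length u - r") auto
    have hd0: "(a + k - (u ! st u p) mod k) mod k = 0"
      and tl0: "enc k u (p @ [a]) z = replicate j 0 @ y"
      using Cons.prems(3) j by auto
    have uk: "u ! st u p < k" using False assms(2) by (meson lessThan_iff not_le nth_mem subsetD)
    have ak: "a < k" using Cons.prems(1) by auto
    have "a = u ! st u p" using zero_iff[OF ak _ hd0] uk by simp
    hence "st u p + 1 \<le> st u (p @ [a])" using st_step False by simp
    hence "r + 1 \<le> st u (p @ [a])" using Cons.prems(2) by simp
    moreover have "length u - (r + 1) = j" using j by simp
    ultimately have "is_factor u ((p @ [a]) @ z)"
      using Cons.IH[of "r+1" "p @ [a]" y] Cons.prems(1) tl0 by simp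
    thus ?thesis by simp
  qed
qed

lemma factor_lemma:
  assumes "k > 0" "set u \<subseteq> {..<k}"
  shows "set z \<subseteq> {..<k} \<Longrightarrow> is_factor (replicate (length u) 0) (enc k u p z) \<Longrightarrow> is_factor u (p @ z)"
proof (induction z arbitrary: p)
  case Nil
  then have "u = []" unfolding is_factor_def by simp
  then show ?case unfolding is_factor_def by (intro exI[of _ p] exI[of _ "[]"]) simp
next
  case (Cons a z)
  then obtain x y where xy: "enc k u p (a # z) = x @ replicate (length u) 0 @ y"
    unfolding is_factor_def by blast
  show ?case
  proof (cases x)
    case Nil
    then show ?thesis using prefix_lemma[OF assms Cons.prems(1), of 0 p y] xy by simp
  next
    case (Cons c x')
    then have "enc k u (p @ [a]) z = x' @ replicate (length u) 0 @ y" using xy by simp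
    hence "is_factor u ((p @ [a]) @ z)" using Cons.IH[of "p @ [a]"] \<open>set (a # z) \<subseteq> {..<k}\<close>
      unfolding is_factor_def by auto
    thus ?thesis by simp
  qed
qed

lemma A_le:
  assumes "k > 0" "u \<in> words k t"
  shows "A k m u \<le> A k m (replicate t 0)"
proof -
  have u: "set u \<subseteq> {..<k}" "length u = t" using assms(2) unfolding words_def by auto
  let ?S = "{w \<in> words k m. \<not> is_factor u w}"
  let ?T = "{w \<in> words k m. \<not> is_factor (replicate t 0) w}"
  have "inj_on (enc k u []) ?S"
    by (rule inj_onI) (use enc_inj[OF assms(1)] in \<open>auto simp: words_def\<close>)
  moreover have "enc k u [] ` ?S \<subseteq> ?T"
  proof
    fix y assume "y \<in> enc k u [] ` ?S"
    then obtain z where z: "z \<in> ?S" "y = enc k u [] z" by blast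
    have "\<not> is_factor (replicate t 0) y"
      using factor_lemma[OF assms(1) u(1), of z "[]"] z u(2) by (auto simp: words_def)
    moreover have "y \<in> words k m" using z enc_length enc_letters[OF assms(1)]
      by (auto simp: words_def)
    ultimately show "y \<in> ?T" by simp
  qed
  moreover have "finite ?T" using words_finite by simp
  ultimately show ?thesis unfolding A_def by (meson card_inj_on_le)
qed

definition mk :: "nat \<Rightarrow> nat \<Rightarrow> nat list \<Rightarrow> nat list" where
  "mk n p v = map (\<lambda>i. v ! (i mod p)) [0..<n]"

lemma periodic_mk:
  assumes "length w = n" "p > 0" "\<And>i. i + p < n \<Longrightarrow> w ! (i + p) = w ! i"
  shows "w = mk n p (take p w)"
proof -
  have per: "i < n \<Longrightarrow> w ! i = w ! (i mod p)" for i
  proof (induction i rule: less_induct)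
    case (less i)
    show ?case
    proof (cases "i < p")
      case True then show ?thesis by simp
    next
      case False
      then have "w ! i = w ! (i - p)" using assms(3)[of "i - p"] less.prems by simp
      also have "\<dots> = w ! ((i - p) mod p)" using less.IH[of "i - p"] less.prems assms(2) False by simp
      also have "(i - p) mod p = i mod p" using False by (simp add: le_mod_geq)
      finally show ?thesis .
    qed
  qed
  show ?thesis
    by (rule nth_equalityI) (use assms per in \<open>auto simp: mk_def\<close>)
qed

lemma occ3:
  assumes "w = u @ z @ u" "is_factor u z" "u \<noteq> []"
  shows "occ u w \<ge> 3"
proof -
  obtain a b where z: "z = a @ u @ b" using assms(2) unfolding is_factor_def by blast
  let ?t = "length u"
  let ?S = "{i. i + ?t \<le> length w \<and> take ?t (drop i w) = u}"
  have "0 \<in> ?S" using assms(1) by simp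
  moreover have "?t + length a \<in> ?S" using assms(1) z by simp
  moreover have "length w - ?t \<in> ?S" using assms(1) by simp
  moreover have "0 < ?t + length a" "?t + length a < length w - ?t"
    using assms z by auto
  ultimately have sub: "{0, ?t + length a, length w - ?t} \<subseteq> ?S" by blast
  have fin: "finite ?S" by (rule finite_subset[of _ "{..length w}"]) auto
  have c3: "card {0, ?t + length a, length w - ?t} = 3"
    using \<open>0 < ?t + length a\<close> \<open>?t + length a < length w - ?t\<close> by simp
  have "card {0, ?t + length a, length w - ?t} \<le> card ?S" by (rule card_mono[OF fin sub])
  thus ?thesis unfolding occ_def using c3 by simp
qed

lemma cover:
  assumes "n \<ge> 1" "w \<in> words k n" "closed_word w"
  shows "w \<in> (\<Union>p\<in>{1..(n+1) div 2}. mk n p ` words k p) \<union>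
    (\<Union>t\<in>{1..n div 2}. \<Union>u\<in>words k t. (\<lambda>z. u @ z @ u) ` {z \<in> words k (n - 2*t). \<not> is_factor u z})"
proof -
  have wl: "length w = n" and wk: "set w \<subseteq> {..<k}" using assms(2) unfolding words_def by auto
  consider "length w \<le> 1" | u where "is_border u w" "occ u w = 2"
    using assms(3) unfolding closed_word_def by blast
  then show ?thesis
  proof cases
    case 1
    hence n1: "n = 1" using wl assms(1) by simp
    have "w = mk n 1 (take 1 w)" by (rule periodic_mk) (use wl n1 in auto)
    moreover have "take 1 w \<in> words k 1" using wk wl n1 unfolding words_def
      by (auto dest: in_set_takeD)
    ultimately show ?thesis using n1 by auto
  next
    case 2
    then obtain x y where u: "u \<noteq> []" "length u < n" "w = u @ x" "w = y @ u"
      using wl unfolding is_border_def by blast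
    let ?t = "length u"
    have uk: "u \<in> words k ?t" using wk u(3) unfolding words_def by auto
    show ?thesis
    proof (cases "2 * ?t \<le> n")
      case True
      let ?z = "take (n - 2 * ?t) x"
      have lx: "length x = n - ?t" using u(3) wl by simp
      have "drop (n - ?t) w = u" using u(4) wl by simp
      moreover have "x = drop ?t w" using u(3) by simp
      moreover have "n - 2 * ?t + ?t = n - ?t" using True by simp
      ultimately have "drop (n - 2 * ?t) x = u" by simp
      hence xz: "x = ?z @ u" by (metis append_take_drop_id)
      hence w: "w = u @ ?z @ u" using u(3) by simp
      have "\<not> is_factor u ?z" using occ3[OF w _ u(1)] 2(2) by auto
      moreover have "?z \<in> words k (n - 2 * ?t)" using wk u(3) lx True
        unfolding words_def by (auto dest: in_set_takeD)
      moreover have "?t \<in> {1..n div 2}" using True u(1) by (auto simp: Suc_le_eq)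
      ultimately show ?thesis using w uk by blast
    next
      case False
      let ?p = "n - ?t"
      have ly: "length y = ?p" using u(4) wl by simp
      have per: "w ! (i + ?p) = w ! i" if "i + ?p < n" for i
      proof -
        have "w ! (i + ?p) = u ! i" using u(4) ly by (simp add: nth_append)
        moreover have "i < ?t" using that u(2) by linarith
        hence "w ! i = u ! i" using u(3) by (simp add: nth_append)
        ultimately show ?thesis by simp
      qed
      have p0: "?p > 0" using u(2) by simp
      have "w = mk n ?p (take ?p w)" by (rule periodic_mk[OF wl p0 per])
      moreover have "take ?p w \<in> words k ?p" using wk wl unfolding words_def
        by (auto dest: in_set_takeD)
      moreover have "?p \<in> {1..(n+1) div 2}" using False p0 by auto
      ultimately show ?thesis by blast
    qed
  qed
qed

theorem corollary8:
  fixes n k :: nat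
  assumes "n \<ge> 1" and "k \<ge> 2"
  shows "C k n \<le> (\<Sum>t = 1..n div 2. k ^ t * A k (n - 2 * t) (replicate t 0))
                  + n * k ^ ((n + 1) div 2)"
proof -
  let ?P = "\<Union>p\<in>{1..(n+1) div 2}. mk n p ` words k p"
  let ?F = "\<lambda>t. \<Union>u\<in>words k t. (\<lambda>z. u @ z @ u) ` {z \<in> words k (n - 2*t). \<not> is_factor u z}"
  let ?T = "\<Union>t\<in>{1..n div 2}. ?F t"
  have k0: "k > 0" using assms(2) by simp
  have finP: "finite ?P" using words_finite by auto
  have finT: "finite ?T" using words_finite by auto
  have "C k n \<le> card (?P \<union> ?T)"
    unfolding C_def
  proof (rule card_mono)
    show "finite (?P \<union> ?T)" using finP finT by simp
    show "{w \<in> words k n. closed_word w} \<subseteq> ?P \<union> ?T"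
    proof
      fix w assume "w \<in> {w \<in> words k n. closed_word w}"
      thus "w \<in> ?P \<union> ?T" using cover[OF assms(1), of w k] by blast
    qed
  qed
  also have "\<dots> \<le> card ?P + card ?T" by (rule card_Un_le)
  also have "card ?P \<le> n * k ^ ((n + 1) div 2)"
  proof -
    have "card ?P \<le> (\<Sum>p\<in>{1..(n+1) div 2}. card (mk n p ` words k p))" by (rule card_UN_le) simp
    also have "\<dots> \<le> (\<Sum>p\<in>{1..(n+1) div 2}. k ^ ((n + 1) div 2))"
    proof (rule sum_mono)
      fix p assume p: "p \<in> {1..(n+1) div 2}"
      have "card (mk n p ` words k p) \<le> card (words k p)" by (rule card_image_le[OF words_finite])
      also have "\<dots> = k ^ p" by (rule words_card)
      also have "\<dots> \<le> k ^ ((n + 1) div 2)" using p k0 by (intro power_increasing) auto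
      finally show "card (mk n p ` words k p) \<le> k ^ ((n + 1) div 2)" .
    qed
    also have "\<dots> = ((n+1) div 2) * k ^ ((n + 1) div 2)" by simp
    also have "\<dots> \<le> n * k ^ ((n + 1) div 2)" using assms(1) by (intro mult_right_mono) auto
    finally show ?thesis .
  qed
  also have "card ?T \<le> (\<Sum>t = 1..n div 2. k ^ t * A k (n - 2 * t) (replicate t 0))"
  proof -
    have "card ?T \<le> (\<Sum>t = 1..n div 2. card (?F t))" by (rule card_UN_le) simp
    also have "\<dots> \<le> (\<Sum>t = 1..n div 2. k ^ t * A k (n - 2 * t) (replicate t 0))"
    proof (rule sum_mono)
      fix t
      have "card (?F t) \<le> (\<Sum>u\<in>words k t. card ((\<lambda>z. u @ z @ u) ` {z \<in> words k (n - 2*t). \<not> is_factor u z}))"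
        by (rule card_UN_le[OF words_finite])
      also have "\<dots> \<le> (\<Sum>u\<in>words k t. A k (n - 2 * t) (replicate t 0))"
      proof (rule sum_mono)
        fix u assume u: "u \<in> words k t"
        have "card ((\<lambda>z. u @ z @ u) ` {z \<in> words k (n - 2*t). \<not> is_factor u z}) \<le> A k (n - 2 * t) u"
          unfolding A_def by (rule card_image_le) (simp add: words_finite)
        also have "\<dots> \<le> A k (n - 2 * t) (replicate t 0)" by (rule A_le[OF k0 u])
        finally show "card ((\<lambda>z. u @ z @ u) ` {z \<in> words k (n - 2*t). \<not> is_factor u z}) \<le> A k (n - 2 * t) (replicate t 0)" .
      qed
      also have "\<dots> = k ^ t * A k (n - 2 * t) (replicate t 0)" by (simp add: words_card)
      finally show "card (?F t) \<le> k ^ t * A k (n - 2 * t) (replicate t 0)" .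
    qed
    finally show ?thesis .
  qed
  finally show ?thesis by simp
qed

end
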